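(* A $*$-ring $R$ is a generalized Rickart $*$-ring if and only if $R$ has a unity element and for each $x\in R$ there exist a projection $e\in R$ and $n\in\mathbb N$ such that $r(x^n)=r(e)$.
   Context: A $*$-ring is an associative ring $R$ with an involution $x\mapsto x^*$ (additive, $(xy)^*=y^*x^*$, $x^{**}=x$). A projection is an element $e$ with $e=e^*=e^2$. For $a\in R$, $r(a)=\{b\in R: ab=0\}$. $R$ is a generalized Rickart $*$-ring if for every $x\in R$ there exist a positive integer $n$ and a projection $g$ with $r(x^n)=gR$. *)

theory Defs
  imports Main
begin

definition is_involution :: "('a::ring \<Rightarrow> 'a) \<Rightarrow> bool" where
  "is_involution s \<longleftrightarrow>
     (\<forall>x y. s (x + y) = s x + s y) \<and>
     (\<forall>x y. s (x * y) = s y * s x) \<and>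
     (\<forall>x. s (s x) = x)"

definition is_projection :: "('a::ring \<Rightarrow> 'a) \<Rightarrow> 'a \<Rightarrow> bool" where
  "is_projection s e \<longleftrightarrow> e = s e \<and> e = e * e"

definition rann :: "'a::ring \<Rightarrow> 'a set" where
  "rann a = {b. a * b = 0}"

definition rideal :: "'a::ring \<Rightarrow> 'a set" where
  "rideal g = {g * y | y. True}"

text \<open>Positive powers in a possibly non-unital ring: rpow x n = x^n for n \<ge> 1
  (the value at n = 0 is an arbitrary convention and never used).\<close>
fun rpow :: "'a::ring \<Rightarrow> nat \<Rightarrow> 'a" where
  "rpow x 0 = 0"
| "rpow x (Suc 0) = x"
| "rpow x (Suc (Suc n)) = x * rpow x (Suc n)"

definition has_unity :: "'a::ring itself \<Rightarrow> bool" where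
  "has_unity _ \<longleftrightarrow> (\<exists>u::'a. \<forall>x. u * x = x \<and> x * u = x)"

definition generalized_rickart :: "('a::ring \<Rightarrow> 'a) \<Rightarrow> bool" where
  "generalized_rickart s \<longleftrightarrow>
     (\<forall>x. \<exists>n>0. \<exists>g. is_projection s g \<and> rann (rpow x n) = rideal g)"

end

theory Submission
  imports Defs
begin

lemma rpow_zero_Suc: "rpow (0::'a::ring) (Suc n) = 0"
  by (induction n) auto

lemma rpow_zero: "n > 0 \<Longrightarrow> rpow (0::'a::ring) n = 0"
  using rpow_zero_Suc by (cases n) auto

lemma inv_zero: assumes "is_involution s" shows "s (0::'a::ring) = 0"
proof -
  have "s (0 + 0) = s 0 + s 0" using assms unfolding is_involution_def by blast
  then show ?thesis by simp
qed

lemma inv_diff: assumes "is_involution s" shows "s ((a::'a::ring) - b) = s a - s b"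
proof -
  have "s ((a - b) + b) = s (a - b) + s b" using assms unfolding is_involution_def by blast
  then show ?thesis by (simp add: algebra_simps)
qed

lemma unity_fix:
  assumes "is_involution s" and u: "\<forall>x. u * x = x \<and> x * u = (x::'a::ring)"
  shows "s u = u"
proof -
  have ss: "s (s u) = u" using assms unfolding is_involution_def by blast
  have "s (s u * u) = s u * s (s u)" using assms unfolding is_involution_def by blast
  also have "\<dots> = s u * u" using ss by simp
  also have "\<dots> = s u" using u by simp
  finally have "s (s u) = s u" using u by simp
  then show ?thesis using ss by simp
qed

lemma compl_proj:
  assumes inv: "is_involution s" and u: "\<forall>x. u * x = x \<and> x * u = (x::'a::ring)"
    and e: "is_projection s e"
  shows "is_projection s (u - e)" "rann e = rideal (u - e)" "rann (u - e) = rideal e"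
proof -
  have su: "s u = u" using unity_fix[OF inv u] .
  have ee: "e * e = e" "s e = e" using e unfolding is_projection_def by auto
  have ue: "u * e = e" "e * u = e" "u * u = u" using u by auto
  have sq: "(u - e) * (u - e) = u - e"
    by (simp add: left_diff_distrib right_diff_distrib ue ee)
  show "is_projection s (u - e)" unfolding is_projection_def
    using sq inv_diff[OF inv] su ee by simp
  show "rann e = rideal (u - e)"
  proof
    show "rann e \<subseteq> rideal (u - e)"
    proof
      fix b assume "b \<in> rann e"
      then have "e * b = 0" by (simp add: rann_def)
      then have "b = (u - e) * b" using u by (simp add: left_diff_distrib)
      then show "b \<in> rideal (u - e)" unfolding rideal_def by blast
    qed
    show "rideal (u - e) \<subseteq> rann e"
    proof
      fix b assume "b \<in> rideal (u - e)"
      then obtain y where "b = (u - e) * y" unfolding rideal_def by blast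
      then have "e * b = (e * u - e * e) * y" by (simp add: left_diff_distrib right_diff_distrib mult.assoc)
      then show "b \<in> rann e" by (simp add: rann_def ue ee)
    qed
  qed
  show "rann (u - e) = rideal e"
  proof
    show "rann (u - e) \<subseteq> rideal e"
    proof
      fix b assume "b \<in> rann (u - e)"
      then have "(u - e) * b = 0" by (simp add: rann_def)
      then have "b = e * b" using u by (simp add: left_diff_distrib)
      then show "b \<in> rideal e" unfolding rideal_def by blast
    qed
    show "rideal e \<subseteq> rann (u - e)"
    proof
      fix b assume "b \<in> rideal e"
      then obtain y where "b = e * y" unfolding rideal_def by blast
      then have "(u - e) * b = (u * e - e * e) * y" by (simp add: left_diff_distrib mult.assoc)
      then show "b \<in> rann (u - e)" by (simp add: rann_def ue ee)
    qed
  qed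
qed

theorem mainTheorem7:
  fixes s :: "'a::ring \<Rightarrow> 'a"
  assumes "is_involution s"
  shows "generalized_rickart s \<longleftrightarrow>
    (has_unity TYPE('a) \<and>
     (\<forall>x::'a. \<exists>e n. is_projection s e \<and> n > 0 \<and> rann (rpow x n) = rann e))"
proof
  assume gr: "generalized_rickart s"
  obtain n g where n: "n > 0" and g: "is_projection s g" and r0: "rann (rpow (0::'a) n) = rideal g"
    using gr unfolding generalized_rickart_def by blast
  have all: "\<And>y. y \<in> rideal g"
  proof -
    fix y
    have "y \<in> rann (rpow (0::'a) n)" by (simp add: rann_def rpow_zero[OF n])
    then show "y \<in> rideal g" using r0 by simp
  qed
  have gg: "g * g = g" "s g = g" using g unfolding is_projection_def by auto
  have left: "\<And>y. g * y = y"
  proof -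
    fix y
    obtain z where "y = g * z" using all[of y] unfolding rideal_def by blast
    then show "g * y = y" by (simp add: mult.assoc[symmetric] gg)
  qed
  have right: "\<And>y. y * g = y"
  proof -
    fix y
    have "s (g * s y) = s (s y)" using left by simp
    then show "y * g = y" using assms gg unfolding is_involution_def by metis
  qed
  have u: "\<forall>x. g * x = x \<and> x * g = x" using left right by blast
  show "has_unity TYPE('a) \<and> (\<forall>x::'a. \<exists>e n. is_projection s e \<and> n > 0 \<and> rann (rpow x n) = rann e)"
  proof
    show "has_unity TYPE('a)" unfolding has_unity_def using u by blast
    show "\<forall>x::'a. \<exists>e n. is_projection s e \<and> n > 0 \<and> rann (rpow x n) = rann e"
    proof
      fix x :: 'a
      obtain m h where m: "m > 0" and h: "is_projection s h" and r: "rann (rpow x m) = rideal h"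
        using gr unfolding generalized_rickart_def by blast
      show "\<exists>e n. is_projection s e \<and> n > 0 \<and> rann (rpow x n) = rann e"
        using compl_proj[OF assms u h] m r by blast
    qed
  qed
next
  assume h: "has_unity TYPE('a) \<and> (\<forall>x::'a. \<exists>e n. is_projection s e \<and> n > 0 \<and> rann (rpow x n) = rann e)"
  then obtain u :: 'a where u: "\<forall>x. u * x = x \<and> x * u = x" unfolding has_unity_def by blast
  show "generalized_rickart s" unfolding generalized_rickart_def
  proof
    fix x :: 'a
    obtain e n where e: "is_projection s e" "n > 0" "rann (rpow x n) = rann e" using h by blast
    show "\<exists>n>0. \<exists>g. is_projection s g \<and> rann (rpow x n) = rideal g"
      using compl_proj[OF assms u e(1)] e by blast
  qed
qed

end
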